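(* Let $\mathcal{H}=\mathbb{C}^2$ and let $\mathcal{GE}$ be the set of all entanglement breaking quantum channels on $\mathcal{L}(\mathcal{H})$. For every density operator $\tau$ on $\mathcal{H}\otimes\mathcal{H}$, $$C(\tau,\mathcal{GE})=\max_{\Psi\in\mathcal{GE}}\operatorname{tr}[\tau J_\Psi]\le\frac12\left(1+\sqrt{\|\boldsymbol{b}(\tau_2)\|^2+\|N(\tau)\|^2}\right),$$ where $\tau_2=\operatorname{tr}_1\tau$ and $\|N(\tau)\|$ is the operator norm of $N(\tau)$ induced by the Euclidean norm on $\mathbb{R}^3$.
   Context: A quantum channel is a linear, completely positive, trace preserving map on $\mathcal{L}(\mathcal{H})$; it is entanglement breaking if $(\mathrm{id}\otimes\Psi)(\rho)$ is separable for every density operator $\rho$ on $\mathcal{H}\otimes\mathcal{H}$. $J_\Psi=(\mathrm{id}\otimes\Psi)(P'_+)$ with $P'_+=\sum_{i,j=0}^1|i\rangle\langle j|\otimes|i\rangle\langle j|$ in the computational basis. $\operatorname{tr}_1$ is the partial trace over the first factor. Bloch vector: $b(X)_i=\operatorname{tr}[\sigma_iX]$, $i=1,2,3$, with Euclidean norm $\|\cdot\|$. Correlation matrix: $N(X)_{ij}=\operatorname{tr}[X(\sigma_i\otimes\sigma_j)]$, $i,j\in\{1,2,3\}$, $\sigma_i$ the Pauli matrices. *)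

theory Defs
  imports "HOL-Analysis.Analysis"
begin

text \<open>Operators on H = C^2 are 2x2 complex matrices (row index first, computational
basis 0,1). Operators on H (x) H are 4x4 complex matrices indexed by pairs:
entry ((i,k),(j,l)) is the coefficient of |i><j| (x) |k><l|.\<close>

type_synonym op2 = "complex^2^2"
type_synonym op4 = "complex^(2\<times>2)^(2\<times>2)"

definition mtrace :: "complex^'n^'n \<Rightarrow> complex" where
  "mtrace A = (\<Sum>i\<in>UNIV. A$i$i)"

definition quadform :: "complex^'n^'n \<Rightarrow> complex^'n \<Rightarrow> complex" where
  "quadform A v = (\<Sum>i\<in>UNIV. \<Sum>j\<in>UNIV. cnj (v$i) * A$i$j * v$j)"

text \<open>Positive semidefinite: <v, A v> is real and nonnegative for all v.\<close>
definition psd :: "complex^'n^'n \<Rightarrow> bool" where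
  "psd A \<longleftrightarrow> (\<forall>v. Im (quadform A v) = 0 \<and> Re (quadform A v) \<ge> 0)"

definition density :: "complex^'n^'n \<Rightarrow> bool" where
  "density A \<longleftrightarrow> psd A \<and> mtrace A = 1"

definition tensor :: "op2 \<Rightarrow> op2 \<Rightarrow> op4" where
  "tensor A B = (\<chi> p q. A$(fst p)$(fst q) * B$(snd p)$(snd q))"

definition cscale :: "complex \<Rightarrow> complex^'n^'m \<Rightarrow> complex^'n^'m" where
  "cscale c A = (\<chi> i j. c * A$i$j)"

text \<open>(id \<otimes> \<Psi>)(X)\<close>
definition id_tensor :: "(op2 \<Rightarrow> op2) \<Rightarrow> op4 \<Rightarrow> op4" where
  "id_tensor \<Psi> X = (\<chi> p q. (\<Psi> (\<chi> k l. X$(fst p,k)$(fst q,l)))$(snd p)$(snd q))"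

text \<open>Complex linearity of a map on L(H).\<close>
definition clinear_map :: "(op2 \<Rightarrow> op2) \<Rightarrow> bool" where
  "clinear_map \<Psi> \<longleftrightarrow> (\<forall>A B. \<Psi> (A + B) = \<Psi> A + \<Psi> B) \<and> (\<forall>c A. \<Psi> (cscale c A) = cscale c (\<Psi> A))"

text \<open>Block matrices on C^n (x) C^2: n x n blocks X i j, each a 2x2 matrix
(the operator sum_{i,j<n} |i><j| (x) X i j). Positivity of such a block matrix.\<close>
definition block_psd :: "nat \<Rightarrow> (nat \<Rightarrow> nat \<Rightarrow> op2) \<Rightarrow> bool" where
  "block_psd n X \<longleftrightarrow> (\<forall>v :: nat \<Rightarrow> complex^2.
     let q = (\<Sum>i<n. \<Sum>j<n. \<Sum>k\<in>UNIV. \<Sum>l\<in>UNIV. cnj (v i $ k) * (X i j)$k$l * v j $ l)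
     in Im q = 0 \<and> Re q \<ge> 0)"

text \<open>Complete positivity: id_n \<otimes> \<Psi> is positive for every n.\<close>
definition completely_positive :: "(op2 \<Rightarrow> op2) \<Rightarrow> bool" where
  "completely_positive \<Psi> \<longleftrightarrow>
     (\<forall>n X. block_psd n X \<longrightarrow> block_psd n (\<lambda>i j. \<Psi> (X i j)))"

definition trace_preserving :: "(op2 \<Rightarrow> op2) \<Rightarrow> bool" where
  "trace_preserving \<Psi> \<longleftrightarrow> (\<forall>A. mtrace (\<Psi> A) = mtrace A)"

definition quantum_channel :: "(op2 \<Rightarrow> op2) \<Rightarrow> bool" where
  "quantum_channel \<Psi> \<longleftrightarrow> clinear_map \<Psi> \<and> completely_positive \<Psi> \<and> trace_preserving \<Psi>"

text \<open>Separable states on H (x) H: finite convex combinations of product states.\<close>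
definition separable :: "op4 \<Rightarrow> bool" where
  "separable \<sigma> \<longleftrightarrow> (\<exists>n (p :: nat \<Rightarrow> real) A B.
     (\<forall>m<n. p m \<ge> 0 \<and> density (A m) \<and> density (B m)) \<and>
     \<sigma> = (\<Sum>m<n. cscale (complex_of_real (p m)) (tensor (A m) (B m))))"

definition entanglement_breaking :: "(op2 \<Rightarrow> op2) \<Rightarrow> bool" where
  "entanglement_breaking \<Psi> \<longleftrightarrow> quantum_channel \<Psi> \<and>
     (\<forall>\<rho> :: op4. density \<rho> \<longrightarrow> separable (id_tensor \<Psi> \<rho>))"

definition munit :: "2 \<Rightarrow> 2 \<Rightarrow> op2" where
  "munit i j = (\<chi> a b. if a = i \<and> b = j then 1 else 0)"

definition Pplus :: op4 where
  "Pplus = (\<Sum>i\<in>UNIV. \<Sum>j\<in>UNIV. tensor (munit i j) (munit i j))"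

definition choi :: "(op2 \<Rightarrow> op2) \<Rightarrow> op4" where
  "choi \<Psi> = id_tensor \<Psi> Pplus"

definition ptrace1 :: "op4 \<Rightarrow> op2" where
  "ptrace1 X = (\<chi> k l. \<Sum>i\<in>UNIV. X$(i,k)$(i,l))"

text \<open>Pauli matrices; index 0,1,2 of type 3 correspond to sigma_1, sigma_2, sigma_3.\<close>
definition pauli :: "3 \<Rightarrow> op2" where
  "pauli a = (if a = 0 then (\<chi> i j. if i = j then 0 else 1)
              else if a = 1 then (\<chi> i j. if i = j then 0 else if i = 0 then - \<i> else \<i>)
              else (\<chi> i j. if i = j then (if i = 0 then 1 else -1) else 0))"

definition bloch :: "op2 \<Rightarrow> real^3" where
  "bloch X = (\<chi> a. Re (mtrace (pauli a ** X)))"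

definition corr :: "op4 \<Rightarrow> real^3^3" where
  "corr X = (\<chi> a b. Re (mtrace (X ** tensor (pauli a) (pauli b))))"

end

theory Submission
  imports Defs
begin

lemma U2: "(UNIV::2 set) = {0,1}"
proof -
  have "(2::2) = 0" by simp
  then show ?thesis using UNIV_2 by auto
qed
lemma all2: "(\<forall>i::2. Q i) \<longleftrightarrow> Q 0 \<and> Q 1"
proof -
  have "\<forall>i::2. i = 0 \<or> i = 1" using U2 by blast
  then show ?thesis by metis
qed
lemma s2: "sum f (UNIV::2 set) = f 0 + f 1"
proof -
  have d: "(0::2) \<noteq> 1" by simp
  have "sum f {0::2,1} = f 0 + f 1" using d by (simp add: sum.insert)
  then show ?thesis unfolding U2 .
qed
lemma U3: "(UNIV::3 set) = {0,1,2}" 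
proof -
  have "(3::3) = 0" by simp
  then show ?thesis using UNIV_3 by auto
qed
lemma s3: "sum f (UNIV::3 set) = f 0 + f 1 + f 2"
proof -
  have d: "(0::3) \<noteq> 1" "(0::3) \<noteq> 2" "(1::3) \<noteq> 2" by simp_all
  have "sum f {0::3,1,2} = f 0 + (f 1 + f 2)" using d by (simp add: sum.insert)
  then show ?thesis unfolding U3 by (simp only: add.assoc)
qed

lemma bloch_simps: "bloch A$0 = Re(A$1$0 + A$0$1)" "bloch A$1 = Im (A$1$0) - Im(A$0$1)"
  "bloch A$2 = Re(A$0$0 - A$1$1)"
  by (simp_all add: bloch_def mtrace_def matrix_matrix_mult_def pauli_def s2)

definition v2 :: "complex \<Rightarrow> complex \<Rightarrow> complex^2" where "v2 a b = (\<chi> i. if i = 0 then a else b)"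

lemma qf2: "quadform (A::op2) (v2 a b) = cnj a*A$0$0*a + cnj a * A$0$1 * b + cnj b * A$1$0 * a + cnj b * A$1$1 * b"
  by (simp add: quadform_def v2_def s2)

lemma norm3: "norm (x::real^3) = sqrt ((x$0)^2 + (x$1)^2 + (x$2)^2)"
  by (simp add: norm_vec_def L2_set_def s3)

lemma density2:
  assumes "density (A::op2)"
  shows "A$0$0 = complex_of_real ((1 + bloch A$2)/2)" "A$1$1 = complex_of_real ((1 - bloch A$2)/2)"
    "A$1$0 = Complex (bloch A$0/2) (bloch A$1/2)" "A$0$1 = Complex (bloch A$0/2) (-bloch A$1/2)"
    "norm (bloch A) \<le> 1"
proof -
  have ps: "\<And>v. Im (quadform A v) = 0 \<and> Re (quadform A v) \<ge> 0" and tr: "A$0$0 + A$1$1 = 1"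
    using assms by (auto simp: density_def psd_def mtrace_def s2)
  obtain r00 s00 where a00: "A$0$0 = Complex r00 s00" using complex.exhaust by blast
  obtain r01 s01 where a01: "A$0$1 = Complex r01 s01" using complex.exhaust by blast
  obtain r10 s10 where a10: "A$1$0 = Complex r10 s10" using complex.exhaust by blast
  obtain r11 s11 where a11: "A$1$1 = Complex r11 s11" using complex.exhaust by blast
  have e1: "s00 = 0" "r00 \<ge> 0" using ps[of "v2 1 0"] by (simp_all add: qf2 a00)
  have e2: "s11 = 0" "r11 \<ge> 0" using ps[of "v2 0 1"] by (simp_all add: qf2 a11)
  have e3: "s01 + s10 = 0" using ps[of "v2 1 1"] e1 e2 by (simp add: qf2 a00 a01 a10 a11)
  have e4: "r01 = r10" using ps[of "v2 1 \<i>"] e1 e2 by (simp add: qf2 a00 a01 a10 a11)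
  have e3': "s01 = - s10" using e3 by simp
  have t: "r00 + r11 = 1" using tr by (simp add: a00 a11 complex_eq_iff)
  have d1: "r11 * (r00*r11 - r10^2 - s10^2) \<ge> 0" using ps[of "v2 (A$1$1) (- A$1$0)"] e1 e2 e3' e4
    by (simp add: qf2 a00 a01 a10 a11 power2_eq_square algebra_simps)
  have d2: "r00 * (r00*r11 - r10^2 - s10^2) \<ge> 0" using ps[of "v2 (- A$0$1) (A$0$0)"] e1 e2 e3' e4
    by (simp add: qf2 a00 a01 a10 a11 power2_eq_square algebra_simps)
  have d: "r00*r11 - r10^2 - s10^2 \<ge> 0" using d1 d2 t by (metis add_nonneg_nonneg distrib_right mult_1)
  have b: "bloch A$0 = 2 * r10" "bloch A$1 = 2 * s10" "bloch A$2 = r00 - r11"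
    using e3 e4 by (simp_all add: bloch_simps a00 a01 a10 a11)
  show "A$0$0 = complex_of_real ((1 + bloch A$2)/2)" "A$1$1 = complex_of_real ((1 - bloch A$2)/2)"
    "A$1$0 = Complex (bloch A$0/2) (bloch A$1/2)" "A$0$1 = Complex (bloch A$0/2) (-bloch A$1/2)"
    using b t e1 e2 e3 e4 by (simp_all add: a00 a01 a10 a11 complex_eq_iff)
  have "(bloch A$0)^2 + (bloch A$1)^2 + (bloch A$2)^2 \<le> 1"
  proof -
    have "(r00 - r11)^2 = (r00+r11)^2 - 4*r00*r11" by (simp add: power2_eq_square algebra_simps)
    then show ?thesis unfolding b using d t by (simp add: power_mult_distrib)
  qed
  then show "norm (bloch A) \<le> 1" by (simp add: norm3)
qed

lemma s22: "sum f (UNIV::(2\<times>2) set) = f (0,0) + f (0,1) + f (1,0) + f(1,1)"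
proof -
  have "sum f (UNIV::(2\<times>2) set) = sum f (UNIV \<times> UNIV)" by simp
  also have "\<dots> = (\<Sum>x\<in>UNIV. \<Sum>y\<in>UNIV. f (x,y))" by (simp add: sum.cartesian_product)
  finally show ?thesis by (simp add: s2 add.assoc)
qed

definition P :: "real^3 \<Rightarrow> op2" where
  "P x = (\<chi> i j. if i = 0 then (if j = 0 then of_real ((1 + x$2)/2) else (of_real (x$0) - \<i> * of_real (x$1))/2)
         else (if j = 0 then (of_real (x$0) + \<i> * of_real (x$1))/2 else of_real ((1 - x$2)/2)))"

lemma density_P: assumes "density A" shows "A = P (bloch A)"
proof -
  note d = density2[OF assms]
  show ?thesis unfolding vec_eq_iff P_def
    using d(1-4) by (simp add: all2 complex_eq_iff)
qed

definition avec :: "op4 \<Rightarrow> 3 \<Rightarrow> complex" where "avec t i = mtrace (t ** tensor (pauli i) (mat 1))"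
definition bvec :: "op4 \<Rightarrow> 3 \<Rightarrow> complex" where "bvec t i = mtrace (t ** tensor (mat 1) (pauli i))"
definition cmat :: "op4 \<Rightarrow> 3 \<Rightarrow> 3 \<Rightarrow> complex" where "cmat t i j = mtrace (t ** tensor (pauli i) (pauli j))"


lemma pauli_e: "pauli 0 $ 0 $ 0 = 0" "pauli 0 $ 0 $ 1 = 1" "pauli 0 $ 1 $ 0 = 1" "pauli 0 $ 1 $ 1 = 0"
  "pauli 1 $ 0 $ 0 = 0" "pauli 1 $ 0 $ 1 = - \<i>" "pauli 1 $ 1 $ 0 = \<i>" "pauli 1 $ 1 $ 1 = 0"
  "pauli 2 $ 0 $ 0 = 1" "pauli 2 $ 0 $ 1 = 0" "pauli 2 $ 1 $ 0 = 0" "pauli 2 $ 1 $ 1 = -1"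
  by (simp_all add: pauli_def)
lemma P_e: "P x $ 0 $ 0 = of_real ((1 + x$2)/2)" "P x $ 0 $ 1 = (of_real (x$0) - \<i> * of_real (x$1))/2"
  "P x $ 1 $ 0 = (of_real (x$0) + \<i> * of_real (x$1))/2" "P x $ 1 $ 1 = of_real ((1 - x$2)/2)"
  by (simp_all add: P_def)
lemma mat_e: "(mat 1 :: op2) $ 0 $ 0 = 1" "(mat 1 :: op2) $ 0 $ 1 = 0" "(mat 1 :: op2) $ 1 $ 0 = 0" "(mat 1 :: op2) $ 1 $ 1 = 1"
  by (simp_all add: mat_def)
lemma trprod: "mtrace ((t::op4) ** M) = (\<Sum>p\<in>UNIV. \<Sum>q\<in>UNIV. t$p$q * M$q$p)"
  by (simp add: mtrace_def matrix_matrix_mult_def)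
lemma tensor_e: "tensor A B $ p $ q = A$(fst p)$(fst q) * B$(snd p)$(snd q)" by (simp add: tensor_def)



lemma tr_PP: "4 * mtrace (t ** tensor (P x) (P y)) = mtrace t + (\<Sum>i\<in>UNIV. of_real (x$i) * avec t i)
   + (\<Sum>i\<in>UNIV. of_real (y$i) * bvec t i) + (\<Sum>i\<in>UNIV. \<Sum>j\<in>UNIV. of_real (x$i) * of_real (y$j) * cmat t i j)"
  unfolding avec_def bvec_def cmat_def trprod
  unfolding tensor_e mtrace_def s22 s3 fst_conv snd_conv pauli_e P_e mat_e
  by (simp add: field_simps)



lemma vmul_bound: "norm (x v* (N::real^3^3)) \<le> onorm (\<lambda>y. N *v y) * norm x"
proof -
  define u where "u = x v* N"
  define L where "L = onorm (\<lambda>y. N *v y)"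
  have L0: "L \<ge> 0" unfolding L_def by (rule onorm_pos_le) simp
  have "(norm u)^2 = inner u u" by (rule power2_norm_eq_inner)
  also have "\<dots> = inner x (N *v u)" unfolding u_def by (rule dot_lmul_matrix)
  also have "\<dots> \<le> norm x * norm (N *v u)" by (rule norm_cauchy_schwarz)
  also have "\<dots> \<le> norm x * (L * norm u)"
    unfolding L_def by (rule mult_left_mono) (auto intro: onorm[where f="\<lambda>y. N *v y", simplified])
  finally have h: "(norm u)^2 \<le> (L * norm x) * norm u" by (simp add: algebra_simps)
  show ?thesis
  proof (cases "norm u = 0")
    case True then show ?thesis using L0 by (simp add: u_def L_def)
  next
    case False
    then have "norm u > 0" by simp
    with h have "norm u \<le> L * norm x" by (simp add: power2_eq_square)
    then show ?thesis by (simp add: u_def L_def mult.commute)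
  qed
qed

lemma key_ineq:
  fixes p :: "nat \<Rightarrow> real" and x y :: "nat \<Rightarrow> real^3" and b :: "real^3" and N :: "real^3^3"
  assumes p0: "\<And>m. m < n \<Longrightarrow> p m \<ge> 0" and p1: "(\<Sum>m<n. p m) = 1"
    and px: "(\<Sum>m<n. p m *\<^sub>R x m) = 0"
    and nx: "\<And>m. m < n \<Longrightarrow> norm (x m) \<le> 1" and ny: "\<And>m. m < n \<Longrightarrow> norm (y m) \<le> 1"
  shows "(\<Sum>m<n. p m * (inner b (y m) + inner (x m) (N *v y m)))
     \<le> sqrt ((norm b)^2 + (onorm (\<lambda>v. N *v v))^2)"
proof -
  define L where "L = onorm (\<lambda>y. N *v y)"
  have L0: "L \<ge> 0" unfolding L_def by (rule onorm_pos_le) simp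
  define s where "s = sqrt ((norm b)^2 + L^2)"
  define w where "w m = b + x m v* N" for m
  have uL: "norm (x m v* N) \<le> L" if "m < n" for m
  proof -
    have "norm (x m v* N) \<le> L * norm (x m)" using vmul_bound[of "x m" N] by (simp add: L_def)
    also have "\<dots> \<le> L * 1" using nx[OF that] L0 by (rule mult_left_mono)
    finally show ?thesis by simp
  qed
  have t1: "inner b (y m) + inner (x m) (N *v y m) \<le> norm (w m)" if "m < n" for m
  proof -
    have "inner b (y m) + inner (x m) (N *v y m) = inner (w m) (y m)"
      by (simp add: w_def inner_add_left dot_lmul_matrix)
    also have "\<dots> \<le> norm (w m) * norm (y m)" by (rule norm_cauchy_schwarz)
    also have "\<dots> \<le> norm (w m) * 1" using ny[OF that] by (rule mult_left_mono) simp
    finally show ?thesis by simp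
  qed
  have "(\<Sum>m<n. p m * (inner b (y m) + inner (x m) (N *v y m))) \<le> (\<Sum>m<n. p m * norm (w m))"
    by (rule sum_mono) (use p0 t1 in \<open>auto intro: mult_left_mono\<close>)
  also have "\<dots> \<le> s"
  proof (cases "s = 0")
    case True
    then have "norm b = 0" "L = 0" unfolding s_def using L0
      by (auto simp: add_nonneg_eq_0_iff)
    then have "\<And>m. m < n \<Longrightarrow> norm (w m) = 0" using uL by (simp add: w_def)
    then show ?thesis by (simp add: True)
  next
    case False
    have "s \<ge> 0" unfolding s_def by simp
    with False have spos: "s > 0" by simp
    have am: "norm (w m) \<le> ((norm (w m))^2 + s^2) / (2 * s)" for m
    proof -
      have "0 \<le> (norm (w m) - s)^2" by simp
      then have "2 * s*norm (w m) \<le> (norm (w m))^2 + s^2" by (simp add: power2_eq_square algebra_simps)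
      then show ?thesis using spos by (simp add: field_simps)
    qed
    have sq: "(norm (w m))^2 = (norm b)^2 + 2 * inner (x m) (N *v b) + (norm (x m v* N))^2" for m
    proof -
      have "inner b (x m v* N) = inner (x m) (N *v b)" by (metis dot_lmul_matrix inner_commute)
      then show ?thesis
        by (simp add: w_def power2_norm_eq_inner inner_add_left inner_add_right inner_commute)
    qed
    have cross: "(\<Sum>m<n. p m * inner (x m) (N *v b)) = 0"
    proof -
      have "(\<Sum>m<n. p m * inner (x m) (N *v b)) = inner (\<Sum>m<n. p m *\<^sub>R x m) (N *v b)"
        by (simp add: inner_sum_left)
      then show ?thesis using px by simp
    qed
    have "(\<Sum>m<n. p m * (norm (w m))^2) \<le> (\<Sum>m<n. p m * ((norm b)^2 + 2 * inner (x m) (N *v b) + L^2))"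
      unfolding sq
      by (rule sum_mono) (use p0 uL L0 in \<open>auto intro!: mult_left_mono power_mono\<close>)
    also have "\<dots> = (norm b)^2 * (\<Sum>m<n. p m) + 2 * (\<Sum>m<n. p m * inner (x m) (N *v b)) + L^2 * (\<Sum>m<n. p m)"
      by (simp add: sum.distrib sum_distrib_left sum_distrib_right algebra_simps)
    also have "\<dots> = (norm b)^2 + L^2"
      using cross p1 by simp
    also have "\<dots> = s^2" unfolding s_def by simp
    finally have S2: "(\<Sum>m<n. p m * (norm (w m))^2) \<le> s^2" .
    have "(\<Sum>m<n. p m * norm (w m)) \<le> (\<Sum>m<n. p m * (((norm (w m))^2 + s^2) / (2 * s)))"
      by (rule sum_mono, rule mult_left_mono[OF am], simp add: p0)
    also have "\<dots> = ((\<Sum>m<n. p m * (norm (w m))^2) + s^2) / (2 * s)"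
      using p1 by (simp add: sum_divide_distrib[symmetric] algebra_simps sum.distrib sum_distrib_right[symmetric])
    also have "\<dots> \<le> (s^2 + s^2) / (2 * s)" using S2 spos by (intro divide_right_mono) simp_all
    also have "\<dots> = s" using spos by (simp add: power2_eq_square)
    finally show ?thesis .
  qed
  finally show ?thesis by (simp add: s_def L_def)
qed



lemma ex2: "(i::2) = 0 \<or> i = 1" using U2 by blast

lemma Pplus_e: "Pplus $ (i,k) $ (j,l) = (if i = k \<and> j = l then 1 else 0)"
  unfolding Pplus_def sum_component tensor_e munit_def
  using ex2[of i] ex2[of j] ex2[of k] ex2[of l] by (auto simp: s2)

lemma choi_e: "choi \<Psi> $ (i,k) $ (j,l) = \<Psi> (munit i j) $ k $ l"
proof -
  have "(\<chi> k l. Pplus $ (i,k) $ (j,l)) = munit i j" by (auto simp: vec_eq_iff Pplus_e munit_def)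
  then show ?thesis by (simp add: choi_def id_tensor_def)
qed

lemma half_density: "density (cscale (1/2) Pplus :: op4)"
proof -
  have q: "quadform (cscale (1/2) Pplus) v = (1/2) * ((v$(0,0) + v$(1,1)) * cnj (v$(0,0) + v$(1,1)))" for v :: "complex^(2\<times>2)"
    by (simp add: quadform_def s22 cscale_def Pplus_e algebra_simps)
  have "psd (cscale (1/2) Pplus :: op4)" unfolding psd_def q complex_mult_cnj by simp
  moreover have "mtrace (cscale (1/2) Pplus :: op4) = 1" by (simp add: mtrace_def s22 cscale_def Pplus_e)
  ultimately show ?thesis by (simp add: density_def)
qed

lemma id_tensor_cscale: assumes "clinear_map \<Psi>" shows "id_tensor \<Psi> (cscale c X) = cscale c (id_tensor \<Psi> X)"
proof -
  have e: "(\<chi> k l. (cscale c X) $ (i,k) $ (j,l)) = cscale c (\<chi> k l. X $ (i,k) $ (j,l))" for i j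
    by (simp add: cscale_def vec_eq_iff)
  have lin: "\<Psi> (cscale c A) = cscale c (\<Psi> A)" for A using assms unfolding clinear_map_def by blast
  show ?thesis unfolding id_tensor_def e lin
    by (simp add: vec_eq_iff cscale_def)
qed

lemma tr_sum: "mtrace ((t::op4) ** (\<Sum>m\<in>S. M m)) = (\<Sum>m\<in>S. mtrace (t ** M m))"
proof -
  have "mtrace (t ** (\<Sum>m\<in>S. M m)) = (\<Sum>a\<in>UNIV. \<Sum>b\<in>UNIV. \<Sum>m\<in>S. t$a$b * M m $b$a)"
    by (simp add: trprod sum_distrib_left)
  also have "\<dots> = (\<Sum>m\<in>S. \<Sum>a\<in>UNIV. \<Sum>b\<in>UNIV. t$a$b * M m $b$a)"
    by (simp add: sum.swap[of _ S])
  finally show ?thesis by (simp add: trprod)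
qed

lemma tr_cscale: "mtrace ((t::op4) ** cscale c M) = c * mtrace (t ** M)"
  by (simp add: trprod cscale_def sum_distrib_left algebra_simps)

lemma bvec_bloch: "Re (bvec t j) = bloch (ptrace1 t) $ j"
  unfolding bvec_def bloch_def trprod
  by (simp add: tensor_e mtrace_def matrix_matrix_mult_def ptrace1_def s22 s2 mat_e algebra_simps)




lemma Re_tr_PP: assumes "mtrace t = 1"
  shows "Re (mtrace (t ** tensor (P x) (P y))) = (1 + (\<Sum>i\<in>UNIV. x$i * Re (avec t i))
     + inner (bloch (ptrace1 t)) y + inner x (corr t *v y)) / 4"
proof -
  have "4 * Re (mtrace (t ** tensor (P x) (P y))) = Re (4 * mtrace (t ** tensor (P x) (P y)))" by simp
  also have "\<dots> = 1 + (\<Sum>i\<in>UNIV. x$i * Re (avec t i)) + (\<Sum>i\<in>UNIV. y$i * Re (bvec t i))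
      + (\<Sum>i\<in>UNIV. \<Sum>j\<in>UNIV. x$i * y$j * Re (cmat t i j))"
    unfolding tr_PP using assms by (simp add: Re_sum)
  also have "(\<Sum>i\<in>UNIV. y$i * Re (bvec t i)) = inner (bloch (ptrace1 t)) y"
    by (simp add: bvec_bloch inner_vec_def mult.commute)
  also have "(\<Sum>i\<in>UNIV. \<Sum>j\<in>UNIV. x$i * y$j * Re (cmat t i j)) = inner x (corr t *v y)"
    by (simp add: inner_vec_def matrix_vector_mult_def cmat_def corr_def sum_distrib_left algebra_simps)
  finally show ?thesis by simp
qed

lemma cscale_2half: "cscale 2 (cscale (1/2) M) = (M::op4)"
  unfolding cscale_def by (simp add: vec_eq_iff)

lemma cscale_sum: "cscale c (\<Sum>m\<in>S. M m) = (\<Sum>m\<in>S. cscale c (M m :: op4))"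
  unfolding cscale_def by (simp add: vec_eq_iff sum_distrib_left)

lemma cscale_cscale: "cscale c (cscale d M) = cscale (c * d) (M :: op4)"
  unfolding cscale_def by (simp add: vec_eq_iff)

theorem proposition4:
  fixes \<tau> :: op4 and \<Psi> :: "op2 \<Rightarrow> op2"
  assumes "density \<tau>" and "entanglement_breaking \<Psi>"
  shows "Re (mtrace (\<tau> ** choi \<Psi>))
           \<le> 1/2 * (1 + sqrt ((norm (bloch (ptrace1 \<tau>)))\<^sup>2 + (onorm (\<lambda>x. corr \<tau> *v x))\<^sup>2))"
proof -
  have tr1: "mtrace \<tau> = 1" using assms(1) by (simp add: density_def)
  have lin: "clinear_map \<Psi>" and tp: "trace_preserving \<Psi>"
    using assms(2) by (auto simp: entanglement_breaking_def quantum_channel_def)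
  have "separable (id_tensor \<Psi> (cscale (1/2) Pplus))"
    using assms(2) half_density by (auto simp: entanglement_breaking_def)
  then have "separable (cscale (1/2) (choi \<Psi>))" by (simp add: id_tensor_cscale[OF lin] choi_def)
  then obtain n p A B where H: "\<forall>m<(n::nat). p m \<ge> 0 \<and> density (A m) \<and> density (B m)"
    and E: "cscale (1/2) (choi \<Psi>) = (\<Sum>m<n. cscale (complex_of_real (p m)) (tensor (A m) (B m)))"
    unfolding separable_def by (elim exE conjE) iprover
  define x where "x m = bloch (A m)" for m
  define y where "y m = bloch (B m)" for m
  have choiE: "choi \<Psi> = (\<Sum>m<n. cscale (complex_of_real (2 * p m)) (tensor (A m) (B m)))"
  proof -
    have "choi \<Psi> = cscale 2 (cscale (1/2) (choi \<Psi>))" by (rule cscale_2half[symmetric])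
    then show ?thesis unfolding E cscale_sum cscale_cscale by simp
  qed
  have choi_ent: "choi \<Psi> $ a $ b = (\<Sum>m<n. complex_of_real (2 * p m) * (A m $ fst a $ fst b * B m $ snd a $ snd b))" for a b
    unfolding choiE by (simp add: cscale_def tensor_e)
  have C: "(\<Sum>m<n. complex_of_real (2 * p m) * A m $ i $ j) = (if i = j then 1 else 0)" for i j
  proof -
    have "(\<Sum>k\<in>UNIV. choi \<Psi> $ (i,k) $ (j,k)) = mtrace (\<Psi> (munit i j))"
      by (simp add: choi_e mtrace_def)
    also have "\<dots> = (if i = j then 1 else 0)" using tp ex2[of i] ex2[of j]
      by (auto simp: trace_preserving_def mtrace_def munit_def s2)
    finally have 1: "(\<Sum>k\<in>UNIV. choi \<Psi> $ (i,k) $ (j,k)) = (if i = j then 1 else 0)" .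
    have "(\<Sum>k\<in>UNIV. choi \<Psi> $ (i,k) $ (j,k))
        = (\<Sum>m<n. complex_of_real (2 * p m) * A m $ i $ j * (\<Sum>k\<in>UNIV. B m $ k $ k))"
      by (simp add: choi_ent sum.swap[of _ "{..<n}"] sum_distrib_left algebra_simps)
    also have "\<dots> = (\<Sum>m<n. complex_of_real (2 * p m) * A m $ i $ j)"
      using H by (intro sum.cong) (auto simp: density_def mtrace_def)
    finally show ?thesis using 1 by simp
  qed
  have dA: "A m $ 0 $ 0 = complex_of_real ((1 + x m $2)/2)" "A m $ 1 $ 1 = complex_of_real ((1 - x m $2)/2)"
    "A m $ 1 $ 0 = Complex (x m $0/2) (x m $1/2)" "norm (x m) \<le> 1" if "m < n" for m
    using density2[of "A m"] H that by (auto simp: x_def)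
  have nY: "norm (y m) \<le> 1" if "m < n" for m using density2[of "B m"] H that by (auto simp: y_def)
  have c00: "(\<Sum>m<n. p m * (1 + x m $ 2)) = 1"
  proof -
    have "Re (\<Sum>m<n. complex_of_real (2 * p m) * A m $ 0 $ 0) = 1" using C[of 0 0] by simp
    moreover have "Re (\<Sum>m<n. complex_of_real (2 * p m) * A m $ 0 $ 0) = (\<Sum>m<n. p m * (1 + x m $ 2))"
      unfolding Re_sum by (rule sum.cong) (auto simp: dA)
    ultimately show ?thesis by simp
  qed
  have c11: "(\<Sum>m<n. p m * (1 - x m $ 2)) = 1"
  proof -
    have "Re (\<Sum>m<n. complex_of_real (2 * p m) * A m $ 1 $ 1) = 1" using C[of 1 1] by simp
    moreover have "Re (\<Sum>m<n. complex_of_real (2 * p m) * A m $ 1 $ 1) = (\<Sum>m<n. p m * (1 - x m $ 2))"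
      unfolding Re_sum by (rule sum.cong) (auto simp: dA)
    ultimately show ?thesis by simp
  qed
  have c10: "(\<Sum>m<n. p m * x m $ 0) = 0" "(\<Sum>m<n. p m * x m $ 1) = 0"
  proof -
    have "Re (\<Sum>m<n. complex_of_real (2 * p m) * A m $ 1 $ 0) = 0"
         "Im (\<Sum>m<n. complex_of_real (2 * p m) * A m $ 1 $ 0) = 0" using C[of 1 0] by simp_all
    moreover have "Re (\<Sum>m<n. complex_of_real (2 * p m) * A m $ 1 $ 0) = (\<Sum>m<n. p m * x m $ 0)"
      unfolding Re_sum by (rule sum.cong) (auto simp: dA)
    moreover have "Im (\<Sum>m<n. complex_of_real (2 * p m) * A m $ 1 $ 0) = (\<Sum>m<n. p m * x m $ 1)"
      unfolding Im_sum by (rule sum.cong) (auto simp: dA)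
    ultimately show "(\<Sum>m<n. p m * x m $ 0) = 0" "(\<Sum>m<n. p m * x m $ 1) = 0" by simp_all
  qed
  have p1: "(\<Sum>m<n. p m) = 1"
  proof -
    have "(\<Sum>m<n. p m * (1 + x m $ 2)) + (\<Sum>m<n. p m * (1 - x m $ 2)) = 2 * (\<Sum>m<n. p m)"
      by (simp add: sum.distrib[symmetric] sum_distrib_left algebra_simps)
    then show ?thesis using c00 c11 by simp
  qed
  have c2: "(\<Sum>m<n. p m * x m $ 2) = 0"
  proof -
    have "(\<Sum>m<n. p m * (1 + x m $ 2)) - (\<Sum>m<n. p m * (1 - x m $ 2)) = 2 * (\<Sum>m<n. p m * x m $ 2)"
      by (simp add: sum_subtractf[symmetric] sum_distrib_left algebra_simps)
    then show ?thesis using c00 c11 by simp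
  qed
  have pxi: "(\<Sum>m<n. p m * x m $ i) = 0" for i
  proof -
    have "i = 0 \<or> i = 1 \<or> i = 2" using U3 by blast
    then show ?thesis using c10 c2 by auto
  qed
  have px: "(\<Sum>m<n. p m *\<^sub>R x m) = 0" by (simp add: vec_eq_iff pxi)
  define a where "a i = Re (avec \<tau> i)" for i
  define b where "b = bloch (ptrace1 \<tau>)"
  define N where "N = corr \<tau>"
  have "Re (mtrace (\<tau> ** choi \<Psi>)) = (\<Sum>m<n. 2 * p m * Re (mtrace (\<tau> ** tensor (A m) (B m))))"
    unfolding choiE tr_sum tr_cscale by (simp add: Re_sum)
  also have "\<dots> = (\<Sum>m<n. 2 * p m * ((1 + (\<Sum>i\<in>UNIV. x m $ i * a i) + inner b (y m) + inner (x m) (N *v y m)) / 4))"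
  proof (rule sum.cong)
    fix m assume "m \<in> {..<n}"
    then have AP: "A m = P (x m)" and BP: "B m = P (y m)" using H density_P by (auto simp: x_def y_def)
    show "2 * p m * Re (mtrace (\<tau> ** tensor (A m) (B m))) =
      2 * p m * ((1 + (\<Sum>i\<in>UNIV. x m $ i * a i) + inner b (y m) + inner (x m) (N *v y m)) / 4)"
      unfolding AP BP Re_tr_PP[OF tr1] a_def b_def N_def by simp
  qed simp
  also have "\<dots> = ((\<Sum>m<n. p m) + (\<Sum>i\<in>UNIV. a i * (\<Sum>m<n. p m * x m $ i))
      + (\<Sum>m<n. p m * (inner b (y m) + inner (x m) (N *v y m)))) / 2"
    by (simp add: sum.distrib sum_distrib_left sum_distrib_right sum_divide_distrib[symmetric] sum.swap[of _ "{..<n}"] algebra_simps)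
  also have "\<dots> = (1 + (\<Sum>m<n. p m * (inner b (y m) + inner (x m) (N *v y m)))) / 2"
    by (simp add: p1 pxi)
  also have "\<dots> \<le> (1 + sqrt ((norm b)^2 + (onorm (\<lambda>v. N *v v))^2)) / 2"
    using key_ineq[of n p x y b N] H p1 px dA(4) nY by auto
  finally show ?thesis by (simp add: b_def N_def)
qed

end
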